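(* Let $X,Y$ be real Banach spaces, $C\subseteq X$ nonempty and closed, $D\subseteq Y$ nonempty, $g:X\to Y$, and $x_0\in g^{-1}(D)\cap C$. Suppose $g$ is locally Lipschitz around $x_0$ and set $y_0:=g(x_0)$. Endow $X\times Y$ with the norm $\|(x,y)\|=\|x\|_X+\|y\|_Y$ and define $\tilde g:X\times Y\to Y$, $\tilde g(x,y)=g(x)-y$. Then the following are equivalent: (i) there exist $a>0$, $s>0$ such that $d_{g^{-1}(D)\cap C}(x)\le a\,d_D(g(x))$ for all $x\in B_X(x_0,s)\cap C$; (ii) there exist $a'>0$, $s'>0$ such that $d_{\tilde g^{-1}(0)\cap(C\times D)}(x,y)\le a'\|\tilde g(x,y)\|_Y$ for all $(x,y)\in B_{X\times Y}((x_0,y_0),s')\cap(C\times D)$.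
   Context: For a nonempty set $A$ in a normed space, $d_A(z)=\inf_{a\in A}\|z-a\|$; $B(z,r)$ denotes the closed ball of radius $r$ centred at $z$. *)

theory Defs
  imports "HOL-Analysis.Analysis"
begin

text \<open>Distance to a set in X \<times> Y with respect to the sum norm
  norm (x,y) = norm x + norm y (Isabelle's built-in product norm is the Euclidean one,
  so we make the sum norm explicit).  Convention as for infdist: 0 for the empty set.\<close>
definition sum_norm_dist :: "('a::real_normed_vector \<times> 'b::real_normed_vector) \<Rightarrow> ('a \<times> 'b) set \<Rightarrow> real" where
  "sum_norm_dist p A = (if A = {} then 0
     else (INF q\<in>A. norm (fst p - fst q) + norm (snd p - snd q)))"

definition sum_norm_cball :: "('a::real_normed_vector \<times> 'b::real_normed_vector) \<Rightarrow> real \<Rightarrow> ('a \<times> 'b) set" where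
  "sum_norm_cball p r = {q. norm (fst q - fst p) + norm (snd q - snd p) \<le> r}"

end

theory Submission
  imports Defs
begin

lemma infdist_approx:
  assumes "A \<noteq> {}" "e > 0"
  shows "\<exists>a\<in>A. dist x a < infdist x A + e"
proof -
  have "(INF a\<in>A. dist x a) < infdist x A + e" using assms infdist_notempty[OF assms(1), of x] by linarith
  then show ?thesis
    using assms(1) by (subst (asm) cINF_less_iff) (auto intro: bdd_belowI2[of _ 0])
qed

lemma snd_le:
  assumes "T \<noteq> {}" "\<forall>q\<in>T. fst q \<in> S"
  shows "infdist x S \<le> sum_norm_dist (x, y) T"
  unfolding sum_norm_dist_def using assms(1)
proof (simp, intro cINF_greatest)
  fix q assume q: "q \<in> T"
  have "infdist x S \<le> dist x (fst q)" using assms q infdist_le by blast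
  also have "\<dots> \<le> norm (x - fst q) + norm (y - snd q)" by (simp add: dist_norm)
  finally show "infdist x S \<le> norm (x - fst q) + norm (y - snd q)" .
qed

lemma snd_ge:
  assumes "q \<in> T"
  shows "sum_norm_dist p T \<le> norm (fst p - fst q) + norm (snd p - snd q)"
  unfolding sum_norm_dist_def using assms
  by (auto intro!: cINF_lower bdd_belowI2[of _ 0])

theorem lemma3p2:
  fixes g :: "'a::banach \<Rightarrow> 'b::banach"
    and C :: "'a set" and D :: "'b set" and x0 :: 'a
  assumes "C \<noteq> {}" and "closed C" and "D \<noteq> {}"
    and "x0 \<in> g -` D \<inter> C"
    and "\<exists>r>0. \<exists>L. L-lipschitz_on (cball x0 r) g"
  shows "(\<exists>a>0. \<exists>s>0. \<forall>x \<in> cball x0 s \<inter> C.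
            infdist x (g -` D \<inter> C) \<le> a * infdist (g x) D)
     \<longleftrightarrow>
         (\<exists>a'>0. \<exists>s'>0. \<forall>p \<in> sum_norm_cball (x0, g x0) s' \<inter> (C \<times> D).
            sum_norm_dist p ((\<lambda>(x, y). g x - y) -` {0} \<inter> (C \<times> D))
              \<le> a' * norm ((\<lambda>(x, y). g x - y) p))"
  (is "?I \<longleftrightarrow> ?II")
proof -
  define S where "S = g -` D \<inter> C"
  define T where "T = (\<lambda>(x, y). g x - y) -` {0} \<inter> (C \<times> D)"
  obtain r L where r: "r > 0" and L: "L-lipschitz_on (cball x0 r) g" using assms(5) by blast
  have L0: "L \<ge> 0" using L by (simp add: lipschitz_on_def)
  have Lip: "norm (g u - g v) \<le> L * norm (u - v)" if "u \<in> cball x0 r" "v \<in> cball x0 r" for u v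
    using L that by (simp add: lipschitz_on_def dist_norm)
  have x0S: "x0 \<in> S" using assms(4) S_def by simp
  have Tmem: "(u, v) \<in> T \<longleftrightarrow> u \<in> C \<and> v \<in> D \<and> v = g u" for u v
    by (auto simp: T_def)
  have TS: "\<forall>q\<in>T. fst q \<in> S" by (auto simp: T_def S_def)
  have Tne: "T \<noteq> {}" using x0S Tmem S_def by auto
  show ?thesis
  proof
    assume ?I
    then obtain a s where a: "a > 0" and s: "s > 0"
      and H: "\<forall>x \<in> cball x0 s \<inter> C. infdist x S \<le> a * infdist (g x) D"
      unfolding S_def by blast
    define s' where "s' = min s (r / 3)"
    have s': "s' > 0" using s r by (simp add: s'_def)
    show ?II
    proof (rule exI[of _ "(1 + L) * a + 1"], rule conjI, rule_tac [2] exI[of _ s'], rule_tac [2] conjI, rule_tac [3] ballI)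
      show "(1 + L) * a + 1 > 0" using a L0 by (simp add: add_pos_nonneg)
      show "s' > 0" by (rule s')
      fix p assume p: "p \<in> sum_norm_cball (x0, g x0) s' \<inter> (C \<times> D)"
      obtain x y where pxy: "p = (x, y)" by (cases p)
      have xC: "x \<in> C" and yD: "y \<in> D" using p pxy by auto
      have "norm (x - x0) + norm (y - g x0) \<le> s'" using p pxy by (auto simp: sum_norm_cball_def)
      then have nx: "norm (x - x0) \<le> s'" using norm_ge_zero[of "y - g x0"] by linarith
      have dS: "infdist x S \<le> a * norm (g x - y)"
      proof -
        have "x \<in> cball x0 s \<inter> C" using nx xC s'_def by (auto simp: dist_norm norm_minus_commute)
        then have "infdist x S \<le> a * infdist (g x) D" using H by blast
        also have "\<dots> \<le> a * norm (g x - y)"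
          using a infdist_le[OF yD, of "g x"] by (simp add: dist_norm)
        finally show ?thesis .
      qed
      have E: "sum_norm_dist (x, y) T \<le> ((1 + L) * a + 1) * norm (g x - y) + (1 + L) * e"
        if e: "e > 0" for e
      proof -
        define e' where "e' = min e (r / 3)"
        have e': "e' > 0" "e' \<le> e" "e' \<le> r / 3" using e r by (auto simp: e'_def)
        obtain x' where x'S: "x' \<in> S" and dx': "dist x x' < infdist x S + e'"
          using infdist_approx[of S e' x] x0S e' by blast
        have "infdist x S \<le> dist x x0" using infdist_le[OF x0S] .
        moreover have "norm (x' - x0) \<le> norm (x - x0) + norm (x - x')"
          using norm_triangle_ineq4[of "x - x0" "x - x'"] by (simp add: add.commute)
        moreover have "s' \<le> r / 3" by (simp add: s'_def)
        ultimately have "norm (x' - x0) \<le> r"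
          using dx' nx e' by (simp add: dist_norm)
        then have x'r: "x' \<in> cball x0 r" by (simp add: dist_norm norm_minus_commute)
        have xr: "x \<in> cball x0 r" using nx s'_def r by (simp add: dist_norm norm_minus_commute)
        have T': "(x', g x') \<in> T" using x'S Tmem S_def by auto
        have "sum_norm_dist (x, y) T \<le> norm (x - x') + norm (y - g x')"
          using snd_ge[OF T', of "(x,y)"] by simp
        also have "\<dots> \<le> norm (x - x') + (norm (g x - y) + norm (g x - g x'))"
          using norm_triangle_ineq4[of "g x - g x'" "g x - y"] by (simp add: add.commute)
        also have "\<dots> \<le> norm (x - x') + (norm (g x - y) + L * norm (x - x'))"
          using Lip[OF xr x'r] by simp
        also have "\<dots> = (1 + L) * norm (x - x') + norm (g x - y)" by (simp add: algebra_simps)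
        also have "\<dots> \<le> (1 + L) * (a * norm (g x - y) + e) + norm (g x - y)"
        proof -
          have "norm (x - x') \<le> a * norm (g x - y) + e" using dx' dS e' by (simp add: dist_norm)
          then show ?thesis using L0 mult_left_mono[of "norm (x - x')" _ "1 + L"] by simp
        qed
        also have "\<dots> = ((1 + L) * a + 1) * norm (g x - y) + (1 + L) * e"
          by (simp add: algebra_simps)
        finally show ?thesis .
      qed
      have "sum_norm_dist (x, y) T \<le> ((1 + L) * a + 1) * norm (g x - y)"
      proof (rule field_le_epsilon)
        fix e :: real assume "e > 0"
        then have "e / (1 + L) > 0" using L0 by simp
        from E[OF this] show "sum_norm_dist (x, y) T \<le> ((1 + L) * a + 1) * norm (g x - y) + e"
          using L0 by simp
      qed
      then show "sum_norm_dist p ((\<lambda>(x, y). g x - y) -` {0} \<inter> (C \<times> D))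
              \<le> ((1 + L) * a + 1) * norm ((\<lambda>(x, y). g x - y) p)"
        using pxy T_def by simp
    qed
  next
    assume ?II
    then obtain a s where a: "a > 0" and s: "s > 0"
      and H: "\<forall>p \<in> sum_norm_cball (x0, g x0) s \<inter> (C \<times> D).
            sum_norm_dist p T \<le> a * norm ((\<lambda>(x, y). g x - y) p)"
      unfolding T_def by blast
    define s' where "s' = min r (s / (2 * (1 + 2 * L)))"
    have s': "s' > 0" using s r L0 by (simp add: s'_def)
    show ?I
    proof (rule exI[of _ a], rule conjI, rule_tac [2] exI[of _ s'], rule_tac [2] conjI, rule_tac [3] ballI)
      show "a > 0" "s' > 0" using a s' by auto
      fix x assume x: "x \<in> cball x0 s' \<inter> C"
      have xC: "x \<in> C" using x by simp
      have nx: "norm (x - x0) \<le> s'" using x by (simp add: dist_norm norm_minus_commute)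
      have xr: "x \<in> cball x0 r" using nx s'_def by (simp add: dist_norm norm_minus_commute)
      have x0r: "x0 \<in> cball x0 r" using r by simp
      have gx: "norm (g x - g x0) \<le> L * norm (x - x0)" using Lip[OF xr x0r] .
      have nx2: "(1 + 2 * L) * norm (x - x0) \<le> s / 2"
      proof -
        have "norm (x - x0) \<le> s / (2 * (1 + 2 * L))" using nx s'_def by simp
        then have "(1 + 2 * L) * norm (x - x0) \<le> (1 + 2 * L) * (s / (2 * (1 + 2 * L)))"
          using L0 by (intro mult_left_mono) auto
        also have "\<dots> = s / 2" using L0 by (simp add: field_simps)
        finally show ?thesis .
      qed
      have E: "infdist x (g -` D \<inter> C) \<le> a * infdist (g x) D + a * e" if e: "e > 0" for e
      proof -
        define e' where "e' = min e (s / 2)"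
        have e': "e' > 0" "e' \<le> e" "e' \<le> s / 2" using e s by (auto simp: e'_def)
        obtain y where yD: "y \<in> D" and dy: "dist (g x) y < infdist (g x) D + e'"
          using infdist_approx[OF assms(3) e'(1), of "g x"] by blast
        have "infdist (g x) D \<le> dist (g x) (g x0)"
          using infdist_le[of "g x0" D "g x"] assms(4) by simp
        then have ny: "norm (y - g x0) \<le> 2 * L * norm (x - x0) + e'"
          using dy gx norm_triangle_ineq4[of "g x - g x0" "g x - y"] by (simp add: dist_norm)
        have "(x, y) \<in> sum_norm_cball (x0, g x0) s \<inter> (C \<times> D)"
          using ny nx2 e' xC yD by (auto simp: sum_norm_cball_def algebra_simps)
        then have "sum_norm_dist (x, y) T \<le> a * norm (g x - y)" using H[rule_format, of "(x, y)"] by simp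
        moreover have "infdist x S \<le> sum_norm_dist (x, y) T" by (rule snd_le[OF Tne TS])
        moreover have "a * norm (g x - y) \<le> a * (infdist (g x) D + e)"
          using dy e' a by (intro mult_left_mono) (auto simp: dist_norm)
        ultimately show ?thesis unfolding S_def by (simp add: algebra_simps)
      qed
      show "infdist x (g -` D \<inter> C) \<le> a * infdist (g x) D"
      proof (rule field_le_epsilon)
        fix e :: real assume "e > 0"
        then have "e / a > 0" using a by simp
        from E[OF this] show "infdist x (g -` D \<inter> C) \<le> a * infdist (g x) D + e"
          using a by simp
      qed
    qed
  qed
qed

end
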